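(* (i) The orbits $Gs$, $s\in S$, are universally measurable subsets of $S$. (ii) If $O\in\mathcal S$, then $\beta$ is universally measurable. (iii) If $O\in\mathcal S$, then for every Borel $B\subseteq G$ the map $s\mapsto\kappa_{\beta(s),s}(B)$ is universally measurable. (iv) If $O\in\mathcal S$, then $\Delta^*$ is universally measurable.
   Context: $G$ is a locally compact second countable Hausdorff group with left Haar measure $\lambda$ and modular function $\Delta$. $(S,\mathcal S)$ is a Borel space on which $G$ acts measurably and properly: with $\mu_s$ the image of $\lambda$ under $g\mapsto gs$, there is a measurable partition $B_1,B_2,\dots$ of $S$ with $\mu_s(B_n)<\infty$ for all $s,n$. $\kappa$ is a kernel from $S\times S$ to $G$ with $\int f(gs,g)\lambda(dg)=\iint f(t,g)\kappa_{s,t}(dg)\mu_s(dt)$ for all $s$ and measurable $f\ge0$, $\kappa_{s,ht}=\kappa_{s,t}\circ\theta_h^{-1}$ ($\theta_h(g)=hg$), and $\kappa_{s,t}$ a probability measure concentrated on $\{g:gs=t\}$ for $t\in Gs$. $O$ is a system of representatives of the orbits, $\beta(s)\in O$ the representative of $Gs$, $\Delta^*(s):=\Delta(g^{-1})$ for any $g$ with $g\beta(s)=s$. Universally measurable means measurable w.r.t. the intersection of the completions of $\mathcal S$ under all finite measures. *)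

theory Defs
  imports "HOL-Probability.Probability"
begin

text \<open>The group G is the type 'g, written additively (group_add does not require
commutativity): g + h is the product gh, 0 the identity, - g the inverse.\<close>

definition lcsc_group :: "'g::{topological_group_add, second_countable_topology, t2_space} itself \<Rightarrow> bool" where
  "lcsc_group _ \<longleftrightarrow> locally_compact_space (euclidean :: 'g topology)"

text \<open>Left Haar measure: nonzero left invariant Borel measure, finite on compacts
(on an lcsc group such measures are automatically Radon).\<close>
definition left_haar :: "'g::{topological_group_add, second_countable_topology, t2_space} measure \<Rightarrow> bool" where
  "left_haar lam \<longleftrightarrow> sets lam = sets borel
     \<and> (\<forall>K. compact K \<longrightarrow> emeasure lam K < \<infinity>)
     \<and> (\<forall>U. open U \<and> U \<noteq> {} \<longrightarrow> emeasure lam U > 0)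
     \<and> (\<forall>g A. A \<in> sets borel \<longrightarrow> emeasure lam ((\<lambda>x. g + x) ` A) = emeasure lam A)"

definition modular_function :: "'g::{topological_group_add, second_countable_topology, t2_space} measure \<Rightarrow> ('g \<Rightarrow> real) \<Rightarrow> bool" where
  "modular_function lam D \<longleftrightarrow> (\<forall>g. D g > 0)
     \<and> (\<forall>g A. A \<in> sets borel \<longrightarrow> emeasure lam ((\<lambda>x. x + g) ` A) = ennreal (D g) * emeasure lam A)"

definition borel_space :: "'s measure \<Rightarrow> bool" where
  "borel_space M \<longleftrightarrow> (\<exists>(f::'s \<Rightarrow> real) B. B \<in> sets borel \<and> bij_betw f (space M) B
     \<and> f \<in> M \<rightarrow>\<^sub>M restrict_space borel B
     \<and> the_inv_into (space M) f \<in> restrict_space borel B \<rightarrow>\<^sub>M M)"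

definition measurable_action :: "('g::{topological_group_add, second_countable_topology, t2_space} \<Rightarrow> 's \<Rightarrow> 's) \<Rightarrow> 's measure \<Rightarrow> bool" where
  "measurable_action act M \<longleftrightarrow> (\<lambda>(g, s). act g s) \<in> (borel \<Otimes>\<^sub>M M) \<rightarrow>\<^sub>M M
     \<and> (\<forall>s\<in>space M. act 0 s = s)
     \<and> (\<forall>g h. \<forall>s\<in>space M. act (g + h) s = act g (act h s))"

definition orbit :: "('g \<Rightarrow> 's \<Rightarrow> 's) \<Rightarrow> 's \<Rightarrow> 's set" where
  "orbit act s = range (\<lambda>g. act g s)"

definition orbit_measure :: "'g measure \<Rightarrow> 's measure \<Rightarrow> ('g \<Rightarrow> 's \<Rightarrow> 's) \<Rightarrow> 's \<Rightarrow> 's measure" where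
  "orbit_measure lam M act s = distr lam M (\<lambda>g. act g s)"

definition proper_action :: "'g measure \<Rightarrow> 's measure \<Rightarrow> ('g \<Rightarrow> 's \<Rightarrow> 's) \<Rightarrow> bool" where
  "proper_action lam M act \<longleftrightarrow> (\<exists>B :: nat \<Rightarrow> 's set. disjoint_family B \<and> (\<Union>n. B n) = space M
     \<and> (\<forall>n. B n \<in> sets M)
     \<and> (\<forall>s\<in>space M. \<forall>n. emeasure (orbit_measure lam M act s) (B n) < \<infinity>))"

definition orbit_representatives :: "'s measure \<Rightarrow> ('g \<Rightarrow> 's \<Rightarrow> 's) \<Rightarrow> 's set \<Rightarrow> bool" where
  "orbit_representatives M act Or \<longleftrightarrow> Or \<subseteq> space M \<and> (\<forall>s\<in>space M. \<exists>!r. r \<in> Or \<and> r \<in> orbit act s)"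

definition rep :: "('g \<Rightarrow> 's \<Rightarrow> 's) \<Rightarrow> 's set \<Rightarrow> 's \<Rightarrow> 's" where
  "rep act Or s = (THE r. r \<in> Or \<and> r \<in> orbit act s)"

definition Delta_star :: "('g::group_add \<Rightarrow> real) \<Rightarrow> ('g \<Rightarrow> 's \<Rightarrow> 's) \<Rightarrow> 's set \<Rightarrow> 's \<Rightarrow> real" where
  "Delta_star D act Or s = D (- (SOME g. act g (rep act Or s) = s))"

definition univ_sets :: "'s measure \<Rightarrow> 's set set" where
  "univ_sets M = {A. \<forall>\<nu>. sets \<nu> = sets M \<and> finite_measure \<nu> \<longrightarrow> A \<in> sets (completion \<nu>)}"

definition univ_measurable :: "'s measure \<Rightarrow> 't measure \<Rightarrow> ('s \<Rightarrow> 't) \<Rightarrow> bool" where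
  "univ_measurable M N f \<longleftrightarrow> f \<in> space M \<rightarrow> space N
     \<and> (\<forall>A\<in>sets N. f -` A \<inter> space M \<in> univ_sets M)"

end

theory Submission
  imports Defs "HOL-Library.Nat_Bijection"
begin


definition pre :: "(nat \<Rightarrow> nat) \<Rightarrow> nat \<Rightarrow> nat list" where
  "pre \<sigma> n = map \<sigma> [0..<n]"

lemma pre_Suc: "pre \<sigma> (Suc n) = pre \<sigma> n @ [\<sigma> n]"
  by (simp add: pre_def)

lemma pre_0[simp]: "pre \<sigma> 0 = []"
  by (simp add: pre_def)

lemma length_pre[simp]: "length (pre \<sigma> n) = n"
  by (simp add: pre_def)

lemma nth_pre[simp]: "i < n \<Longrightarrow> pre \<sigma> n ! i = \<sigma> i"
  by (simp add: pre_def)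

lemma take_pre: "i \<le> n \<Longrightarrow> take i (pre \<sigma> n) = pre \<sigma> i"
  by (simp add: pre_def take_map)

lemma pre_Suc_Cons: "pre \<sigma> (Suc n) = \<sigma> 0 # map \<sigma> [Suc 0..<Suc n]"
  unfolding pre_def by (subst upt_conv_Cons) auto

definition souslin :: "'a set set \<Rightarrow> 'a set set" where
  "souslin F = {(\<Union>\<sigma>. \<Inter>n. P (pre \<sigma> (Suc n))) | P. \<forall>l. P l \<in> F}"

lemma souslinI: "(\<And>l. P l \<in> F) \<Longrightarrow> A = (\<Union>\<sigma>. \<Inter>n. P (pre \<sigma> (Suc n))) \<Longrightarrow> A \<in> souslin F"
  unfolding souslin_def by blast

lemma souslinE: "A \<in> souslin F \<Longrightarrow> (\<And>P. (\<And>l. P l \<in> F) \<Longrightarrow> A = (\<Union>\<sigma>. \<Inter>n. P (pre \<sigma> (Suc n))) \<Longrightarrow> thesis) \<Longrightarrow> thesis"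
  unfolding souslin_def by blast

lemma souslin_iff: "A \<in> souslin F \<longleftrightarrow> (\<exists>P. (\<forall>l. P l \<in> F) \<and> A = (\<Union>\<sigma>. \<Inter>n. P (pre \<sigma> (Suc n))))"
  unfolding souslin_def by auto

lemma souslin_base: "A \<in> F \<Longrightarrow> A \<in> souslin F"
  by (rule souslinI[of "\<lambda>_. A"]) auto

lemma souslin_mono: "F \<subseteq> G \<Longrightarrow> souslin F \<subseteq> souslin G"
  unfolding souslin_def by blast

lemma souslin_Union:
  assumes A: "\<And>i::nat. A i \<in> souslin F"
  shows "(\<Union>i. A i) \<in> souslin F"
proof -
  from A have "\<forall>i. \<exists>P. (\<forall>l. P l \<in> F) \<and> A i = (\<Union>\<sigma>. \<Inter>n. P (pre \<sigma> (Suc n)))"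
    unfolding souslin_iff by simp
  then have "\<exists>P. \<forall>i. (\<forall>l. P i l \<in> F) \<and> A i = (\<Union>\<sigma>. \<Inter>n. P i (pre \<sigma> (Suc n)))"
    by (rule choice)
  then obtain P where PP: "\<forall>i. (\<forall>l. P i l \<in> F) \<and> A i = (\<Union>\<sigma>. \<Inter>n. P i (pre \<sigma> (Suc n)))"
    by blast
  then have P: "\<And>i l. P i l \<in> F" and AP: "\<And>i. A i = (\<Union>\<sigma>. \<Inter>n. P i (pre \<sigma> (Suc n)))"
    by auto
  define Q where "Q l = (case l of [] \<Rightarrow> P 0 [] | x # xs \<Rightarrow> P (fst (prod_decode x)) (snd (prod_decode x) # xs))" for l
  have QC: "Q (x # xs) = P (fst (prod_decode x)) (snd (prod_decode x) # xs)" for x xs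
    by (simp add: Q_def)
  have Q: "Q l \<in> F" for l using P by (cases l) (simp_all add: Q_def)
  have sub1: "(\<Union>i. A i) \<subseteq> (\<Union>\<sigma>. \<Inter>n. Q (pre \<sigma> (Suc n)))"
  proof
    fix x assume "x \<in> (\<Union>i. A i)"
    then obtain i where "x \<in> A i" by blast
    then obtain \<sigma> where x: "\<And>n. x \<in> P i (pre \<sigma> (Suc n))" using AP by auto
    define \<tau> where "\<tau> j = (if j = 0 then prod_encode (i, \<sigma> 0) else \<sigma> j)" for j
    have "Q (pre \<tau> (Suc n)) = P i (pre \<sigma> (Suc n))" for n
    proof -
      have m: "map \<tau> [Suc 0..<Suc n] = map \<sigma> [Suc 0..<Suc n]" by (rule map_cong) (auto simp: \<tau>_def)
      have t0: "\<tau> 0 = prod_encode (i, \<sigma> 0)" by (simp add: \<tau>_def)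
      show ?thesis unfolding pre_Suc_Cons m t0 QC by simp
    qed
    with x show "x \<in> (\<Union>\<sigma>. \<Inter>n. Q (pre \<sigma> (Suc n)))" by auto
  qed
  have sub2: "(\<Union>\<sigma>. \<Inter>n. Q (pre \<sigma> (Suc n))) \<subseteq> (\<Union>i. A i)"
  proof
    fix x assume "x \<in> (\<Union>\<sigma>. \<Inter>n. Q (pre \<sigma> (Suc n)))"
    then obtain \<tau> where x: "\<And>n. x \<in> Q (pre \<tau> (Suc n))" by blast
    define i where "i = fst (prod_decode (\<tau> 0))"
    define \<sigma> where "\<sigma> j = (if j = 0 then snd (prod_decode (\<tau> 0)) else \<tau> j)" for j
    have "Q (pre \<tau> (Suc n)) = P i (pre \<sigma> (Suc n))" for n
    proof -
      have m: "map \<sigma> [Suc 0..<Suc n] = map \<tau> [Suc 0..<Suc n]" by (rule map_cong) (auto simp: \<sigma>_def)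
      have t0: "\<sigma> 0 = snd (prod_decode (\<tau> 0))" by (simp add: \<sigma>_def)
      show ?thesis unfolding pre_Suc_Cons m t0 QC i_def by simp
    qed
    with x have "x \<in> A i" unfolding AP by auto
    then show "x \<in> (\<Union>i. A i)" by blast
  qed
  show ?thesis
    by (rule souslinI[OF Q]) (rule equalityI[OF sub1 sub2])
qed

lemma finite_Inter_closed:
  assumes "\<And>a b. a \<in> F \<Longrightarrow> b \<in> F \<Longrightarrow> a \<inter> b \<in> F"
  shows "finite I \<Longrightarrow> I \<noteq> {} \<Longrightarrow> I \<subseteq> F \<Longrightarrow> \<Inter>I \<in> F"
proof (induction I rule: finite_ne_induct)
  case (insert x I)
  then show ?case using assms by auto
qed auto

lemma prod_encode_mono2: "j \<le> n \<Longrightarrow> prod_encode (k, j) \<le> prod_encode (k, n)"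
proof -
  assume "j \<le> n"
  have "triangle (k + j) \<le> triangle (k + n)"
    by (rule lift_Suc_mono_le[of triangle]) (use \<open>j \<le> n\<close> in simp_all)
  then show ?thesis by (simp add: prod_encode_def)
qed

lemma souslin_Inter:
  assumes Int: "\<And>a b. a \<in> F \<Longrightarrow> b \<in> F \<Longrightarrow> a \<inter> b \<in> F"
  assumes A: "\<And>i::nat. A i \<in> souslin F"
  shows "(\<Inter>i. A i) \<in> souslin F"
proof -
  from A have "\<forall>i. \<exists>P. (\<forall>l. P l \<in> F) \<and> A i = (\<Union>\<sigma>. \<Inter>n. P (pre \<sigma> (Suc n)))"
    unfolding souslin_iff by simp
  then have "\<exists>P. \<forall>i. (\<forall>l. P i l \<in> F) \<and> A i = (\<Union>\<sigma>. \<Inter>n. P i (pre \<sigma> (Suc n)))"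
    by (rule choice)
  then obtain P where PP: "\<forall>i. (\<forall>l. P i l \<in> F) \<and> A i = (\<Union>\<sigma>. \<Inter>n. P i (pre \<sigma> (Suc n)))"
    by blast
  then have P: "\<And>i l. P i l \<in> F" and AP: "\<And>i. A i = (\<Union>\<sigma>. \<Inter>n. P i (pre \<sigma> (Suc n)))"
    by auto
  define I where "I l = {(k, n). prod_encode (k, n) < length l}" for l :: "nat list"
  define Q where "Q l = (if l = [] then P 0 [] else
     \<Inter>((\<lambda>(k, n). P k (map (\<lambda>j. l ! prod_encode (k, j)) [0..<Suc n])) ` I l))" for l
  have Isub: "I l \<subseteq> {..<length l} \<times> {..<length l}" for l
  proof
    fix p assume "p \<in> I l"
    obtain k n where p0: "p = (k,n)" by (cases p)
    with \<open>p \<in> I l\<close> have p: "p = (k,n)" "prod_encode (k,n) < length l" by (simp_all add: I_def)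
    have "k \<le> prod_encode (k,n)" "n \<le> prod_encode (k,n)" by (rule le_prod_encode_1, rule le_prod_encode_2)
    with p show "p \<in> {..<length l} \<times> {..<length l}" by simp
  qed
  have finI: "finite (I l)" for l
    by (rule finite_subset[OF Isub]) simp
  define f where "f l = (\<lambda>(k, n). P k (map (\<lambda>j. l ! prod_encode (k, j)) [0..<Suc n]))" for l
  have Qf: "l \<noteq> [] \<Longrightarrow> Q l = \<Inter>(f l ` I l)" for l by (simp add: Q_def f_def)
  have Q: "Q l \<in> F" for l
  proof (cases "l = []")
    case False
    have "prod_encode (0,0) = 0" by (simp add: prod_encode_def)
    with False have "(0,0) \<in> I l" by (simp add: I_def)
    then have ne: "f l ` I l \<noteq> {}" by blast
    have sub: "f l ` I l \<subseteq> F" using P by (auto simp: f_def)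
    have "\<Inter>(f l ` I l) \<in> F"
      by (rule finite_Inter_closed[OF Int finite_imageI[OF finI] ne sub])
    then show ?thesis using Qf[OF False] by simp
  qed (simp add: Q_def P)
  have key: "Q (pre \<tau> (Suc N)) = (\<Inter>p\<in>I (pre \<tau> (Suc N)). P (fst p) (pre (\<lambda>j. \<tau> (prod_encode (fst p, j))) (Suc (snd p))))" for \<tau> N
  proof -
    have eq: "f (pre \<tau> (Suc N)) p = P (fst p) (pre (\<lambda>j. \<tau> (prod_encode (fst p, j))) (Suc (snd p)))"
      if "p \<in> I (pre \<tau> (Suc N))" for p
    proof -
      obtain k n where p: "p = (k, n)" by (cases p)
      have lt: "prod_encode (k, j) < Suc N" if "j < Suc n" for j
      proof -
        have "prod_encode (k, j) \<le> prod_encode (k, n)" using that by (intro prod_encode_mono2) simp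
        also have "prod_encode (k, n) < Suc N" using \<open>p \<in> I _\<close> by (simp add: I_def p)
        finally show ?thesis .
      qed
      have "map (\<lambda>j. pre \<tau> (Suc N) ! prod_encode (k, j)) [0..<Suc n] = map (\<lambda>j. \<tau> (prod_encode (k, j))) [0..<Suc n]"
      proof (rule map_cong[OF refl])
        fix j assume "j \<in> set [0..<Suc n]"
        then have "j < Suc n" by (simp only: set_upt atLeastLessThan_iff)
        from lt[OF this] show "pre \<tau> (Suc N) ! prod_encode (k, j) = \<tau> (prod_encode (k, j))" by simp
      qed
      then have mm: "map (\<lambda>j. pre \<tau> (Suc N) ! prod_encode (k, j)) [0..<Suc n] = map (\<lambda>j. \<tau> (prod_encode (k, j))) [0..<Suc n]" .
      have "f (pre \<tau> (Suc N)) p = P k (map (\<lambda>j. pre \<tau> (Suc N) ! prod_encode (k, j)) [0..<Suc n])"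
        by (simp only: f_def p prod.case)
      also have "\<dots> = P k (map (\<lambda>j. \<tau> (prod_encode (k, j))) [0..<Suc n])" by (simp only: mm)
      also have "\<dots> = P (fst p) (pre (\<lambda>j. \<tau> (prod_encode (fst p, j))) (Suc (snd p)))"
        by (simp only: p fst_conv snd_conv pre_def)
      finally show ?thesis .
    qed
    have "Q (pre \<tau> (Suc N)) = \<Inter>(f (pre \<tau> (Suc N)) ` I (pre \<tau> (Suc N)))"
      by (rule Qf) (simp add: pre_def)
    also have "\<dots> = (\<Inter>p\<in>I (pre \<tau> (Suc N)). P (fst p) (pre (\<lambda>j. \<tau> (prod_encode (fst p, j))) (Suc (snd p))))"
      by (rule INF_cong[OF refl eq])
    finally show ?thesis .
  qed
  have sub1: "(\<Inter>i. A i) \<subseteq> (\<Union>\<sigma>. \<Inter>n. Q (pre \<sigma> (Suc n)))"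
  proof
    fix x assume "x \<in> (\<Inter>i. A i)"
    then have x: "\<forall>i. x \<in> A i" by blast
    have "\<forall>k. \<exists>\<sigma>. \<forall>n. x \<in> P k (pre \<sigma> (Suc n))"
    proof
      fix k from x have "x \<in> A k" by blast
      then show "\<exists>\<sigma>. \<forall>n. x \<in> P k (pre \<sigma> (Suc n))" unfolding AP by simp
    qed
    then have "\<exists>\<sigma>. \<forall>k. \<forall>n. x \<in> P k (pre (\<sigma> k) (Suc n))" by (rule choice)
    then obtain \<sigma> where \<sigma>: "\<And>k n. x \<in> P k (pre (\<sigma> k) (Suc n))" by blast
    define \<tau> where "\<tau> m = \<sigma> (fst (prod_decode m)) (snd (prod_decode m))" for m
    have st: "\<And>k. (\<lambda>j. \<tau> (prod_encode (k, j))) = \<sigma> k" by (simp add: \<tau>_def)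
    have "x \<in> Q (pre \<tau> (Suc N))" for N unfolding key st using \<sigma> by simp
    then show "x \<in> (\<Union>\<sigma>. \<Inter>n. Q (pre \<sigma> (Suc n)))" by blast
  qed
  have sub2: "(\<Union>\<sigma>. \<Inter>n. Q (pre \<sigma> (Suc n))) \<subseteq> (\<Inter>i. A i)"
  proof
    fix x assume "x \<in> (\<Union>\<sigma>. \<Inter>n. Q (pre \<sigma> (Suc n)))"
    then obtain \<tau> where x: "\<And>N. x \<in> Q (pre \<tau> (Suc N))" by blast
    have "x \<in> A i" for i
    proof -
      have "x \<in> P i (pre (\<lambda>j. \<tau> (prod_encode (i, j))) (Suc n))" for n
      proof -
        have "(i, n) \<in> I (pre \<tau> (Suc (prod_encode (i, n))))" by (simp add: I_def)
        moreover have "x \<in> Q (pre \<tau> (Suc (prod_encode (i, n))))" by (rule x)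
        ultimately show ?thesis unfolding key by fastforce
      qed
      then have xx: "x \<in> (\<Inter>n. P i (pre (\<lambda>j. \<tau> (prod_encode (i, j))) (Suc n)))" by blast
      have "\<exists>\<sigma>. x \<in> (\<Inter>n. P i (pre \<sigma> (Suc n)))"
      proof (rule exI) show "x \<in> (\<Inter>n. P i (pre (\<lambda>j. \<tau> (prod_encode (i, j))) (Suc n)))" by (rule xx) qed
      then show "x \<in> A i" unfolding AP by simp
    qed
    then show "x \<in> (\<Inter>i. A i)" by blast
  qed
  show ?thesis
    by (rule souslinI[OF Q]) (rule equalityI[OF sub1 sub2])
qed

lemma souslin_complete:
  assumes fin: "emeasure N (space N) < \<infinity>"
    and compl: "\<And>A B. A \<subseteq> B \<Longrightarrow> B \<in> null_sets N \<Longrightarrow> A \<in> sets N"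
    and A: "A \<in> souslin (sets N)"
  shows "A \<in> sets N"
proof -
  from A[unfolded souslin_iff] obtain P where P: "\<And>l. P l \<in> sets N" and AP: "A = (\<Union>\<sigma>. \<Inter>n. P (pre \<sigma> (Suc n)))"
    by auto
  define AS where "AS s = (\<Union>\<sigma>\<in>{\<sigma>. pre \<sigma> (length s) = s}. \<Inter>n. P (pre \<sigma> (Suc n)))" for s
  have AS0: "AS [] = A" by (simp add: AS_def AP)
  have ASsplit: "AS s = (\<Union>k. AS (s @ [k]))" for s
  proof safe
    fix x assume "x \<in> AS s"
    then obtain \<sigma> where "pre \<sigma> (length s) = s" "\<forall>n. x \<in> P (pre \<sigma> (Suc n))" by (auto simp: AS_def)
    then have "pre \<sigma> (length (s @ [\<sigma> (length s)])) = s @ [\<sigma> (length s)]" by (simp add: pre_Suc)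
    with \<open>\<forall>n. x \<in> _\<close> show "x \<in> (\<Union>k. AS (s @ [k]))" by (auto simp: AS_def)
  next
    fix x k assume "x \<in> AS (s @ [k])"
    then obtain \<sigma> where "pre \<sigma> (Suc (length s)) = s @ [k]" "\<forall>n. x \<in> P (pre \<sigma> (Suc n))" by (auto simp: AS_def)
    then have "pre \<sigma> (length s) = s" by (simp add: pre_Suc)
    with \<open>\<forall>n. x \<in> _\<close> show "x \<in> AS s" by (auto simp: AS_def)
  qed
  have ASP: "s \<noteq> [] \<Longrightarrow> AS s \<subseteq> P s" for s
  proof
    fix x assume "s \<noteq> []" "x \<in> AS s"
    then obtain \<sigma> where s: "pre \<sigma> (length s) = s" and x: "\<forall>n. x \<in> P (pre \<sigma> (Suc n))" by (auto simp: AS_def)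
    from \<open>s \<noteq> []\<close> have "Suc (length s - 1) = length s" by (cases s) auto
    with x[rule_format, of "length s - 1"] s show "x \<in> P s" by simp
  qed
  have ASsp: "AS s \<subseteq> space N" for s
  proof (cases "s = []")
    case True
    have "AS [k] \<subseteq> space N" for k using ASP[of "[k]"] P[of "[k]"] sets.sets_into_space by blast
    then show ?thesis using True ASsplit[of "[]"] by auto
  next
    case False then show ?thesis using ASP[of s] P[of s] sets.sets_into_space by blast
  qed
  have "\<exists>E. measurable_envelope N (AS s) E" for s
    using measurable_envelopeI_countable_cover[of "AS s" "\<lambda>_. space N" N] ASsp fin by auto
  then have "\<forall>s. \<exists>E. measurable_envelope N (AS s) E" by blast
  then have "\<exists>H. \<forall>s. measurable_envelope N (AS s) (H s)" by (rule choice)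
  then obtain H where H: "\<And>s. measurable_envelope N (AS s) (H s)" by blast
  define H' where "H' s = (if s = [] then H s else H s \<inter> P s)" for s
  have H'sets: "H' s \<in> sets N" for s using measurable_envelopeD(2)[OF H] P by (auto simp: H'_def)
  have ASH': "AS s \<subseteq> H' s" for s using measurable_envelopeD(1)[OF H] ASP by (auto simp: H'_def)
  have H'null: "F \<in> sets N \<Longrightarrow> F \<subseteq> H' s - AS s \<Longrightarrow> emeasure N F = 0" for F s
    by (rule measurable_envelopeD1[OF H[of s]]) (auto simp: H'_def split: if_splits)
  define D where "D s = H' s - (\<Union>k. H' (s @ [k]))" for s
  have "D s \<in> null_sets N" for s
  proof -
    have "D s \<in> sets N" using H'sets by (auto simp: D_def)
    moreover have "D s \<subseteq> H' s - AS s" using ASH' ASsplit[of s] by (auto simp: D_def)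
    ultimately show ?thesis using H'null by (auto simp: null_sets_def)
  qed
  then have Znull: "(\<Union>s\<in>UNIV. D s) \<in> null_sets N"
    by (intro null_sets_UN') auto
  have sub: "H' [] - (\<Union>s\<in>UNIV. D s) \<subseteq> A"
  proof
    fix x assume x: "x \<in> H' [] - (\<Union>s\<in>UNIV. D s)"
    define c where "c s = (SOME k. x \<in> H' (s @ [k]))" for s
    have c: "x \<in> H' s \<Longrightarrow> x \<in> H' (s @ [c s])" for s
    proof -
      assume "x \<in> H' s"
      with x have "x \<notin> D s" by auto
      with \<open>x \<in> H' s\<close> have "\<exists>k. x \<in> H' (s @ [k])" by (auto simp: D_def)
      then show ?thesis unfolding c_def by (rule someI_ex)
    qed
    define ss where "ss n = rec_nat [] (\<lambda>_ s. s @ [c s]) n" for n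
    have ss0: "ss 0 = []" and ssS: "ss (Suc n) = ss n @ [c (ss n)]" for n by (simp_all add: ss_def)
    have xin: "x \<in> H' (ss n)" for n
      by (induction n) (use x c in \<open>auto simp: ss0 ssS\<close>)
    define \<sigma> where "\<sigma> n = c (ss n)" for n
    have pre_ss: "pre \<sigma> n = ss n" for n
      by (induction n) (auto simp: ss0 ssS pre_Suc \<sigma>_def)
    have "x \<in> P (pre \<sigma> (Suc n))" for n
      using xin[of "Suc n"] by (auto simp: pre_ss H'_def ssS)
    then show "x \<in> A" unfolding AP by auto
  qed
  have "H' [] - A \<in> sets N"
    by (rule compl[OF _ Znull]) (use sub in auto)
  moreover have "A = H' [] - (H' [] - A)" using ASH'[of "[]"] AS0 by auto
  ultimately show ?thesis using H'sets[of "[]"] by (metis sets.Diff)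
qed



lemma Hausdorff_euclidean_t2: "Hausdorff_space (euclidean :: 'a::t2_space topology)"
  unfolding Hausdorff_space_def disjnt_def by (metis hausdorff open_openin)

lemma lc_open_compact_Union:
  fixes U :: "'g::{t2_space, second_countable_topology} set"
  assumes lc: "locally_compact_space (euclidean :: 'g topology)"
    and U: "open U"
  obtains L :: "nat \<Rightarrow> 'g set" where "\<And>n. compact (L n)" "U = (\<Union>n. L n)"
proof -
  have nb: "neighbourhood_base_of (compactin euclidean) (euclidean :: 'g topology)"
    using locally_compact_imp_neighbourhood_base[OF lc
        locally_compact_Hausdorff_imp_regular_space[OF lc Hausdorff_euclidean_t2]] .
  obtain \<B> :: "'g set set" where B: "countable \<B>" "\<And>C. C \<in> \<B> \<Longrightarrow> open C"
    "\<And>S. open S \<Longrightarrow> \<exists>U. U \<subseteq> \<B> \<and> S = \<Union>U"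
    by (rule univ_second_countable) blast
  define BU where "BU = {b\<in>\<B>. \<exists>C. compact C \<and> b \<subseteq> C \<and> C \<subseteq> U}"
  have "\<forall>b\<in>BU. \<exists>C. compact C \<and> b \<subseteq> C \<and> C \<subseteq> U" by (auto simp: BU_def)
  then obtain C where C: "\<And>b. b \<in> BU \<Longrightarrow> compact (C b) \<and> b \<subseteq> C b \<and> C b \<subseteq> U" by metis
  have cU: "countable BU" using B(1) by (auto simp: BU_def)
  have Ueq: "U = (\<Union>b\<in>BU. C b)"
  proof safe
    fix x assume "x \<in> U"
    then obtain V K where VK: "open V" "compact K" "x \<in> V" "V \<subseteq> K" "K \<subseteq> U"
      using nb U unfolding neighbourhood_base_of by (metis compactin_euclidean_iff open_openin)
    obtain W where "W \<subseteq> \<B>" "V = \<Union>W" using B(3)[OF \<open>open V\<close>] by blast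
    with VK obtain b where "b \<in> \<B>" "x \<in> b" "b \<subseteq> V" by blast
    with VK have "b \<in> BU" by (auto simp: BU_def)
    with C \<open>x \<in> b\<close> show "x \<in> (\<Union>b\<in>BU. C b)" by blast
  qed (use C in blast)
  show ?thesis
  proof (cases "BU = {}")
    case True
    then show ?thesis using that[of "\<lambda>_. {}"] Ueq by auto
  next
    case False
    show ?thesis
    proof (rule that[of "\<lambda>n. C (from_nat_into BU n)"])
      show "compact (C (from_nat_into BU n))" for n using C from_nat_into[OF False] by blast
      show "U = (\<Union>n. C (from_nat_into BU n))"
        unfolding Ueq using range_from_nat_into[OF False cU] by (metis image_image)
    qed
  qed
qed

definition rects :: "'a measure \<Rightarrow> ('a \<times> 'g::topological_space) set set" where
  "rects M = {a \<times> K | a K. a \<in> sets M \<and> compact K}"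

lemma rects_Int:
  fixes x y :: "('a \<times> 'g::t2_space) set"
  shows "x \<in> rects M \<Longrightarrow> y \<in> rects M \<Longrightarrow> x \<inter> y \<in> rects M"
proof -
  assume "x \<in> rects M" "y \<in> rects M"
  then obtain a K a' K' where "x = a \<times> K" "y = a' \<times> K'" "a \<in> sets M" "a' \<in> sets M" "compact K" "compact K'"
    unfolding rects_def by blast
  then have "x \<inter> y = (a \<inter> a') \<times> (K \<inter> K')" "a \<inter> a' \<in> sets M" "compact (K \<inter> K')"
    by (auto simp: Times_Int_Times)
  then show ?thesis unfolding rects_def by blast
qed

lemma souslin_proj:
  assumes E: "E \<in> souslin (rects M :: ('a \<times> 'g::t2_space) set set)"
  shows "fst ` E \<in> souslin (sets M)"
proof -
  from E[unfolded souslin_iff] obtain P where P: "\<And>l. P l \<in> rects M" and EP: "E = (\<Union>\<sigma>. \<Inter>n. P (pre \<sigma> (Suc n)))"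
    by auto
  have "\<forall>l. \<exists>p. P l = fst p \<times> snd p \<and> fst p \<in> sets M \<and> compact (snd p)"
  proof
    fix l
    from P[of l] obtain a K where "P l = a \<times> K" "a \<in> sets M" "compact K" unfolding rects_def by blast
    then show "\<exists>p. P l = fst p \<times> snd p \<and> fst p \<in> sets M \<and> compact (snd p)"
      by (intro exI[of _ "(a, K)"]) simp
  qed
  then have "\<exists>p. \<forall>l. P l = fst (p l) \<times> snd (p l) \<and> fst (p l) \<in> sets M \<and> compact (snd (p l))"
    by (rule choice)
  then obtain p where pp: "\<forall>l. P l = fst (p l) \<times> snd (p l) \<and> fst (p l) \<in> sets M \<and> compact (snd (p l))"
    by blast
  define a where "a l = fst (p l)" for l
  define K where "K l = snd (p l)" for l
  have aK: "\<And>l. P l = a l \<times> K l" "\<And>l. a l \<in> sets M" "\<And>l. compact (K l)"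
    using pp by (auto simp: a_def K_def)
  define Q where "Q l = (if (\<Inter>i\<in>{1..length l}. K (take i l)) = {} then {} else a l)" for l
  show ?thesis
  proof (rule souslinI[of Q])
    show "Q l \<in> sets M" for l using aK by (auto simp: Q_def)
    have Qpre: "Q (pre \<sigma> (Suc n)) = (if (\<Inter>i\<in>{1..Suc n}. K (pre \<sigma> i)) = {} then {} else a (pre \<sigma> (Suc n)))"
      for \<sigma> n
    proof -
      have "(\<Inter>i\<in>{1..Suc n}. K (take i (pre \<sigma> (Suc n)))) = (\<Inter>i\<in>{1..Suc n}. K (pre \<sigma> i))"
        by (intro INF_cong) (auto simp: take_pre)
      then show ?thesis by (simp add: Q_def)
    qed
    have nest: "(\<Inter>n. K (pre \<sigma> (Suc n))) \<noteq> {} \<longleftrightarrow> (\<forall>n. (\<Inter>i\<in>{1..Suc n}. K (pre \<sigma> i)) \<noteq> {})" for \<sigma>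
    proof
      assume "(\<Inter>n. K (pre \<sigma> (Suc n))) \<noteq> {}"
      then obtain y where "\<forall>n. y \<in> K (pre \<sigma> (Suc n))" by auto
      then have "y \<in> K (pre \<sigma> i)" if "i \<in> {1..Suc n}" for i n
      proof -
        from that obtain m where "i = Suc m" by (cases i) auto
        with \<open>\<forall>n. y \<in> K (pre \<sigma> (Suc n))\<close> show ?thesis by simp
      qed
      then have "y \<in> (\<Inter>i\<in>{1..Suc n}. K (pre \<sigma> i))" for n by (intro INT_I)
      then show "\<forall>n. (\<Inter>i\<in>{1..Suc n}. K (pre \<sigma> i)) \<noteq> {}" by (metis empty_iff)
    next
      assume H: "\<forall>n. (\<Inter>i\<in>{1..Suc n}. K (pre \<sigma> i)) \<noteq> {}"
      have "K (pre \<sigma> (Suc 0)) \<inter> (\<Inter>n\<in>UNIV. K (pre \<sigma> (Suc n))) \<noteq> {}"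
      proof (rule compact_imp_fip_image)
        show "compact (K (pre \<sigma> (Suc 0)))" using aK by auto
        show "closed (K (pre \<sigma> (Suc n)))" for n by (rule compact_imp_closed[OF aK(3)])
        fix I' :: "nat set" assume "finite I'" "I' \<subseteq> UNIV"
        then obtain N where N: "\<forall>n\<in>I'. n \<le> N" using finite_nat_set_iff_bounded_le by auto
        have "(\<Inter>i\<in>{1..Suc N}. K (pre \<sigma> i)) \<subseteq> K (pre \<sigma> (Suc 0)) \<inter> (\<Inter>n\<in>I'. K (pre \<sigma> (Suc n)))"
        proof (intro subsetI IntI INT_I)
          fix z assume z: "z \<in> (\<Inter>i\<in>{1..Suc N}. K (pre \<sigma> i))"
          show "z \<in> K (pre \<sigma> (Suc 0))" using z by (rule INT_D) simp
          fix n assume "n \<in> I'" then have "Suc n \<in> {1..Suc N}" using N by auto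
          with z show "z \<in> K (pre \<sigma> (Suc n))" by (rule INT_D)
        qed
        moreover have "(\<Inter>i\<in>{1..Suc N}. K (pre \<sigma> i)) \<noteq> {}" using H by (rule spec)
        ultimately show "K (pre \<sigma> (Suc 0)) \<inter> (\<Inter>n\<in>I'. K (pre \<sigma> (Suc n))) \<noteq> {}"
          by (metis subset_empty)
      qed
      then obtain z where "z \<in> K (pre \<sigma> (Suc 0)) \<inter> (\<Inter>n\<in>UNIV. K (pre \<sigma> (Suc n)))" by (metis ex_in_conv)
      then have "z \<in> (\<Inter>n. K (pre \<sigma> (Suc n)))" by (rule IntD2)
      then show "(\<Inter>n. K (pre \<sigma> (Suc n))) \<noteq> {}" by (metis empty_iff)
    qed
    show "fst ` E = (\<Union>\<sigma>. \<Inter>n. Q (pre \<sigma> (Suc n)))"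
    proof (rule equalityI; rule subsetI)
      fix z assume "z \<in> fst ` E"
      then obtain x y where z: "z = x" and xy: "(x, y) \<in> E" by force
      from xy obtain \<sigma> where "\<forall>n. (x, y) \<in> P (pre \<sigma> (Suc n))"
        unfolding EP by blast
      then have xs: "\<forall>n. x \<in> a (pre \<sigma> (Suc n)) \<and> y \<in> K (pre \<sigma> (Suc n))"
        unfolding aK(1) by simp
      then have "y \<in> (\<Inter>n. K (pre \<sigma> (Suc n)))" by blast
      then have "(\<Inter>n. K (pre \<sigma> (Suc n))) \<noteq> {}" by blast
      then have ne: "\<forall>n. (\<Inter>i\<in>{1..Suc n}. K (pre \<sigma> i)) \<noteq> {}" unfolding nest .
      have "x \<in> Q (pre \<sigma> (Suc n))" for n
        using ne xs unfolding Qpre by simp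
      then have "x \<in> (\<Inter>n. Q (pre \<sigma> (Suc n)))" by blast
      then show "z \<in> (\<Union>\<sigma>. \<Inter>n. Q (pre \<sigma> (Suc n)))" unfolding z by (rule UN_I[of \<sigma>, OF UNIV_I])
    next
      fix x assume "x \<in> (\<Union>\<sigma>. \<Inter>n. Q (pre \<sigma> (Suc n)))"
      then obtain \<sigma> where x: "\<forall>n. x \<in> Q (pre \<sigma> (Suc n))" by blast
      have ne: "\<forall>n. (\<Inter>i\<in>{1..Suc n}. K (pre \<sigma> i)) \<noteq> {}"
      proof
        fix n show "(\<Inter>i\<in>{1..Suc n}. K (pre \<sigma> i)) \<noteq> {}"
          using x[rule_format, of n] unfolding Qpre by (auto split: if_splits)
      qed
      have xa: "\<forall>n. x \<in> a (pre \<sigma> (Suc n))"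
      proof
        fix n show "x \<in> a (pre \<sigma> (Suc n))"
          using x[rule_format, of n] unfolding Qpre by (auto split: if_splits)
      qed
      from ne have "(\<Inter>n. K (pre \<sigma> (Suc n))) \<noteq> {}" unfolding nest .
      then obtain y where y: "\<forall>n. y \<in> K (pre \<sigma> (Suc n))" by blast
      have "(x, y) \<in> P (pre \<sigma> (Suc n))" for n unfolding aK(1) using xa y by simp
      then have "(x, y) \<in> (\<Inter>n. P (pre \<sigma> (Suc n)))" by blast
      then have "(x, y) \<in> E" unfolding EP by (rule UN_I[of \<sigma>, OF UNIV_I])
      then show "x \<in> fst ` E" by force
    qed
  qed
qed



lemma souslin_univ:
  assumes "\<nu>sets": "sets \<nu> = sets M" and fin: "finite_measure \<nu>" and A: "A \<in> souslin (sets M)"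
  shows "A \<in> sets (completion \<nu>)"
proof (rule souslin_complete)
  show "emeasure (completion \<nu>) (space (completion \<nu>)) < \<infinity>"
    using finite_measure.emeasure_finite[OF fin, of "space \<nu>"] by (simp add: top.not_eq_extremum)
  show "A \<subseteq> B \<Longrightarrow> B \<in> null_sets (completion \<nu>) \<Longrightarrow> A \<in> sets (completion \<nu>)" for A B
    by (rule completion.complete)
  have "sets M \<subseteq> sets (completion \<nu>)" using \<nu>sets by auto
  then show "A \<in> souslin (sets (completion \<nu>))" using souslin_mono A by blast
qed

lemma gen_souslin:
  fixes Mx :: "'a measure"
  assumes lc: "locally_compact_space (euclidean :: 'g::{t2_space, second_countable_topology} topology)"
  shows "sets (Mx \<Otimes>\<^sub>M (borel :: 'g measure)) \<subseteq> souslin (rects Mx)"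
proof -
  define \<Omega> where "\<Omega> = space Mx \<times> (UNIV :: 'g set)"
  define R where "R = (rects Mx :: ('a \<times> 'g) set set)"
  obtain K :: "nat \<Rightarrow> 'g set" where K: "\<And>n. compact (K n)" "UNIV = (\<Union>n. K n)"
    using lc_open_compact_Union[OF lc open_UNIV] by blast
  have RI: "a \<in> sets Mx \<Longrightarrow> compact C \<Longrightarrow> a \<times> C \<in> souslin R" for a C
    by (rule souslin_base) (auto simp: R_def rects_def)
  have strip: "a \<in> sets Mx \<Longrightarrow> a \<times> (UNIV :: 'g set) \<in> souslin R" for a
  proof -
    assume a: "a \<in> sets Mx"
    have "a \<times> (UNIV :: 'g set) = (\<Union>n. a \<times> K n)" using K(2) by auto
    also have "\<dots> \<in> souslin R" by (rule souslin_Union) (rule RI[OF a K(1)])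
    finally show ?thesis .
  qed
  have emp: "{} \<in> souslin R"
  proof -
    have "{} \<times> {} \<in> souslin R" by (rule RI) auto
    then show ?thesis by simp
  qed
  have Om: "\<Omega> \<in> souslin R" unfolding \<Omega>_def by (rule strip) simp
  define D where "D = {C. C \<subseteq> \<Omega> \<and> C \<in> souslin R \<and> \<Omega> - C \<in> souslin R}"
  have RInt: "a \<in> R \<Longrightarrow> b \<in> R \<Longrightarrow> a \<inter> b \<in> R" for a b unfolding R_def by (rule rects_Int)
  have sa: "sigma_algebra \<Omega> D"
    unfolding sigma_algebra_iff2
  proof (intro conjI allI ballI impI)
    show "D \<subseteq> Pow \<Omega>" by (auto simp: D_def)
    show "{} \<in> D" using emp Om by (simp add: D_def)
    fix s assume "s \<in> D"
    then have "s \<subseteq> \<Omega>" "s \<in> souslin R" "\<Omega> - s \<in> souslin R" by (auto simp: D_def)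
    moreover then have "\<Omega> - (\<Omega> - s) = s" by auto
    ultimately show "\<Omega> - s \<in> D" by (auto simp: D_def)
  next
    fix A :: "nat \<Rightarrow> _" assume "range A \<subseteq> D"
    then have A: "\<And>i. A i \<subseteq> \<Omega>" "\<And>i. A i \<in> souslin R" "\<And>i. \<Omega> - A i \<in> souslin R"
      by (auto simp: D_def)
    have "(\<Union>i. A i) \<in> souslin R" by (rule souslin_Union[OF A(2)])
    moreover have "\<Omega> - (\<Union>i. A i) = (\<Inter>i. \<Omega> - A i)" by auto
    moreover have "(\<Inter>i. \<Omega> - A i) \<in> souslin R" by (rule souslin_Inter[OF RInt A(3)])
    ultimately show "(\<Union>i. A i) \<in> D" using A(1) by (auto simp: D_def)
  qed
  interpret D: sigma_algebra \<Omega> D by (rule sa)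
  have opens: "space Mx \<times> U \<in> D" if U: "open U" for U :: "'g set"
  proof -
    obtain L :: "nat \<Rightarrow> 'g set" where L: "\<And>n. compact (L n)" "U = (\<Union>n. L n)"
      using lc_open_compact_Union[OF lc U] by blast
    have "space Mx \<times> U = (\<Union>n. space Mx \<times> L n)" using L(2) by auto
    also have "\<dots> \<in> souslin R" by (rule souslin_Union) (rule RI[OF sets.top L(1)])
    finally have 1: "space Mx \<times> U \<in> souslin R" .
    have "\<Omega> - space Mx \<times> U = (\<Union>n. space Mx \<times> (K n \<inter> (- U)))"
      using K(2) by (auto simp: \<Omega>_def)
    also have "\<dots> \<in> souslin R"
      by (rule souslin_Union) (rule RI[OF sets.top compact_Int_closed[OF K(1)]], use U in auto)
    finally show ?thesis using 1 by (auto simp: D_def \<Omega>_def)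
  qed
  have cyl: "space Mx \<times> b \<in> D" if "b \<in> sigma_sets UNIV {S. open S}" for b :: "'g set"
    using that
  proof (induction rule: sigma_sets.induct)
    case (Basic a) then show ?case using opens by auto
  next
    case Empty then show ?case using D.empty_sets by simp
  next
    case (Compl a)
    have "space Mx \<times> (UNIV - a) = \<Omega> - space Mx \<times> a" by (auto simp: \<Omega>_def)
    then show ?case using D.compl_sets[OF Compl.IH] by simp
  next
    case (Union a)
    have "space Mx \<times> (\<Union>i. a i) = (\<Union>i. space Mx \<times> a i)" by auto
    then show ?case using D.countable_UN[of "\<lambda>i. space Mx \<times> a i"] Union.IH by auto
  qed
  have strip2: "a \<times> UNIV \<in> D" if "a \<in> sets Mx" for a
  proof -
    have "\<Omega> - a \<times> UNIV = (space Mx - a) \<times> UNIV" by (auto simp: \<Omega>_def)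
    moreover have "space Mx - a \<in> sets Mx" using that by auto
    ultimately show ?thesis using strip[OF that] strip[of "space Mx - a"] sets.sets_into_space[OF that]
      by (auto simp: D_def \<Omega>_def)
  qed
  have gen: "{a \<times> b | a b. a \<in> sets Mx \<and> b \<in> sets (borel :: 'g measure)} \<subseteq> D"
  proof safe
    fix a b assume a: "a \<in> sets Mx" and b: "b \<in> sets (borel :: 'g measure)"
    have "a \<times> b = (a \<times> UNIV) \<inter> (space Mx \<times> b)" using sets.sets_into_space[OF a] by auto
    moreover have "space Mx \<times> b \<in> D" using b by (intro cyl) (simp add: sets_borel)
    ultimately show "a \<times> b \<in> D" using D.Int[OF strip2[OF a]] by simp
  qed
  have "sets (Mx \<Otimes>\<^sub>M (borel :: 'g measure)) = sigma_sets \<Omega> {a \<times> b | a b. a \<in> sets Mx \<and> b \<in> sets (borel :: 'g measure)}"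
    by (simp add: sets_pair_measure \<Omega>_def)
  also have "\<dots> \<subseteq> D" by (rule D.sigma_sets_subset[OF gen])
  also have "\<dots> \<subseteq> souslin R" by (auto simp: D_def)
  finally show ?thesis unfolding R_def .
qed

lemma proj_univ:
  fixes M :: "'a measure"
  assumes lc: "locally_compact_space (euclidean :: 'g::{t2_space, second_countable_topology} topology)"
    and T: "T \<in> sets (M \<Otimes>\<^sub>M (borel :: 'g measure))"
  shows "fst ` T \<in> univ_sets M"
proof -
  have "fst ` T \<in> souslin (sets M)"
    by (rule souslin_proj) (use gen_souslin[OF lc] T in blast)
  then show ?thesis unfolding univ_sets_def using souslin_univ by blast
qed



lemma no_shift_invariant_prob:
  fixes Qm :: "real measure"
  assumes P: "prob_space Qm" and S: "sets Qm = sets borel" and c: "c > 0"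
    and inv: "\<And>t. measure Qm {..t} = measure Qm {..t - c}"
  shows False
proof -
  interpret prob_space Qm by (rule P)
  have sp: "space Qm = UNIV" using sets_eq_imp_space_eq[OF S] by simp
  have F0: "measure Qm {..t} = 0" for t
  proof -
    define A where "A n = {..t - real n * c}" for n
    have As: "range A \<subseteq> sets Qm" by (auto simp: A_def S)
    have dec: "decseq A" unfolding decseq_def
    proof (intro allI impI subsetI)
      fix m n x assume mn: "m \<le> n" and x: "x \<in> A n"
      have "real m * c \<le> real n * c" using mn c by (intro mult_right_mono) auto
      with x show "x \<in> A m" by (simp add: A_def)
    qed
    have const: "measure Qm (A n) = measure Qm {..t}" for n
    proof (induction n)
      case 0 then show ?case by (simp add: A_def)
    next
      case (Suc n)
      have "measure Qm (A (Suc n)) = measure Qm {..(t - real n * c) - c}"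
        by (simp add: A_def algebra_simps)
      also have "\<dots> = measure Qm (A n)" using inv[of "t - real n * c"] by (simp add: A_def)
      finally show ?case using Suc by simp
    qed
    have emp: "(\<Inter>n. A n) = {}"
    proof (rule ccontr)
      assume "(\<Inter>n. A n) \<noteq> {}"
      then obtain x where "x \<in> (\<Inter>n. A n)" by blast
      then have x: "x \<le> t - real n * c" for n by (simp add: A_def)
      obtain n where "t - x < real n * c"
        using reals_Archimedean3[OF c] by blast
      with x[of n] show False by simp
    qed
    have "(\<lambda>n. measure Qm (A n)) \<longlonglongrightarrow> measure Qm (\<Inter>n. A n)"
      by (rule finite_Lim_measure_decseq[OF As dec])
    then have "(\<lambda>n. measure Qm {..t}) \<longlonglongrightarrow> 0" using emp const by simp
    then show ?thesis by (simp add: LIMSEQ_const_iff)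
  qed
  define B where "B n = {..real n}" for n :: nat
  have Bs: "range B \<subseteq> sets Qm" by (auto simp: B_def S)
  have inc: "incseq B" unfolding B_def incseq_def by auto
  have "(\<lambda>n. measure Qm (B n)) \<longlonglongrightarrow> measure Qm (\<Union>n. B n)"
    by (rule finite_Lim_measure_incseq[OF Bs inc])
  moreover have "(\<Union>n. B n) = UNIV"
  proof -
    have "x \<in> (\<Union>n. B n)" for x :: real
    proof -
      obtain n where "x \<le> real n" using real_arch_simple by blast
      then show ?thesis by (auto simp: B_def)
    qed
    then show ?thesis by blast
  qed
  ultimately have "(\<lambda>n. 0) \<longlonglongrightarrow> measure Qm UNIV" using F0 by (simp add: B_def)
  then have "measure Qm UNIV = 0" by (simp add: LIMSEQ_const_iff)
  with prob_space sp show False by simp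
qed

lemma tr_eq: "(\<lambda>x. x + a) ` A = (\<lambda>x. x + - a) -` (A::'g::group_add set)"
proof (rule set_eqI)
  fix x
  show "x \<in> (\<lambda>x. x + a) ` A \<longleftrightarrow> x \<in> (\<lambda>x. x + - a) -` A"
  proof
    assume "x \<in> (\<lambda>x. x + a) ` A"
    then obtain y where "y \<in> A" "x = y + a" by blast
    then show "x \<in> (\<lambda>x. x + - a) -` A" by (simp add: add.assoc)
  next
    assume "x \<in> (\<lambda>x. x + - a) -` A"
    then have "x + - a \<in> A" by simp
    moreover have "x = (x + - a) + a" by (simp add: add.assoc)
    ultimately show "x \<in> (\<lambda>x. x + a) ` A" by (rule rev_image_eqI)
  qed
qed

lemma tr_borel:
  fixes A :: "'g::{topological_group_add, second_countable_topology, t2_space} set"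
  assumes "A \<in> sets borel" shows "(\<lambda>x. x + a) ` A \<in> sets borel"
proof -
  have "continuous_on UNIV (\<lambda>x::'g. x + - a)" by (intro continuous_intros)
  then have "(\<lambda>x::'g. x + - a) \<in> borel_measurable borel" by (rule borel_measurable_continuous_onI)
  then show ?thesis unfolding tr_eq by (rule measurable_sets_borel[OF _ assms])
qed

lemma haar_A0:
  fixes lam :: "'g::{topological_group_add, second_countable_topology, t2_space} measure"
  assumes lc: "locally_compact_space (euclidean :: 'g topology)" and haar: "left_haar lam"
  obtains A0 where "A0 \<in> sets borel" "0 < emeasure lam A0" "emeasure lam A0 < \<infinity>"
proof -
  have ls: "sets lam = sets borel" using haar by (simp add: left_haar_def)
  obtain U K where UK: "openin euclidean U" "compactin euclidean K" "(0::'g) \<in> U" "U \<subseteq> K"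
  proof -
    have "\<forall>x \<in> topspace (euclidean::'g topology). \<exists>U K. openin euclidean U \<and> compactin euclidean K \<and> x \<in> U \<and> U \<subseteq> K"
      using lc by (simp only: locally_compact_space_def)
    then have "\<exists>U K. openin euclidean U \<and> compactin euclidean K \<and> (0::'g) \<in> U \<and> U \<subseteq> K"
      by (metis UNIV_I topspace_euclidean)
    then show ?thesis using that by blast
  qed
  have "open U" using UK(1) by (metis open_openin)
  have "compact K" using UK(2) by (metis compactin_euclidean_iff)
  have Kb: "K \<in> sets borel" using \<open>compact K\<close> compact_imp_closed borel_closed by blast
  have "0 < emeasure lam U" using haar \<open>open U\<close> UK(3) by (auto simp: left_haar_def)
  also have "\<dots> \<le> emeasure lam K"
    by (rule emeasure_mono[OF UK(4)]) (simp add: ls Kb)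
  finally have "0 < emeasure lam K" .
  moreover have "emeasure lam K < \<infinity>" using haar \<open>compact K\<close> by (simp add: left_haar_def)
  ultimately show ?thesis using that Kb by blast
qed

lemma haar_D_mult:
  fixes lam :: "'g::{topological_group_add, second_countable_topology, t2_space} measure"
  assumes lc: "locally_compact_space (euclidean :: 'g topology)" and haar: "left_haar lam"
    and modular: "modular_function lam D"
  shows "D (a + b) = D a * D b"
proof -
  obtain A0 where A0: "A0 \<in> sets borel" "0 < emeasure lam A0" "emeasure lam A0 < \<infinity>"
    using haar_A0[OF lc haar] by blast
  have mod: "\<And>g A. A \<in> sets borel \<Longrightarrow> emeasure lam ((\<lambda>x. x + g) ` A) = ennreal (D g) * emeasure lam A"
    and pos: "\<And>g. D g > 0" using modular by (auto simp: modular_function_def)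
  define r where "r = enn2real (emeasure lam A0)"
  have r: "emeasure lam A0 = ennreal r" "r > 0" using A0
    by (auto simp: r_def enn2real_positive_iff less_top[symmetric] ennreal_enn2real_if)
  have img: "(\<lambda>x. x + (a + b)) ` A0 = (\<lambda>x. x + b) ` ((\<lambda>x. x + a) ` A0)"
    by (simp add: image_image add.assoc)
  have "ennreal (D (a + b)) * ennreal r = ennreal (D b) * (ennreal (D a) * ennreal r)"
    using mod[OF A0(1), of "a + b"] mod[OF tr_borel[OF A0(1)], of b a] mod[OF A0(1), of a] img r(1)
    by simp
  moreover have "ennreal (D (a + b) * r) = ennreal (D (a + b)) * ennreal r"
    by (rule ennreal_mult) (use pos[of "a+b"] r(2) in auto)
  moreover have "ennreal (D b * D a * r) = ennreal (D b) * (ennreal (D a) * ennreal r)"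
  proof -
    have "ennreal (D b * (D a * r)) = ennreal (D b) * ennreal (D a * r)"
      by (rule ennreal_mult) (use pos[of a] pos[of b] r(2) in auto)
    also have "ennreal (D a * r) = ennreal (D a) * ennreal r"
      by (rule ennreal_mult) (use pos[of a] r(2) in auto)
    finally show ?thesis by (simp add: mult.assoc)
  qed
  ultimately have "ennreal (D (a + b) * r) = ennreal (D b * D a * r)" by simp
  moreover have "0 \<le> D (a + b) * r" "0 \<le> D b * D a * r"
    using pos[of "a+b"] pos[of a] pos[of b] r(2) by simp_all
  ultimately have "D (a + b) * r = D b * D a * r"
    by (simp only: ennreal_inj)
  then show ?thesis using r(2) by simp
qed

lemma haar_D_meas:
  fixes lam :: "'g::{topological_group_add, second_countable_topology, t2_space} measure"
  assumes lc: "locally_compact_space (euclidean :: 'g topology)" and haar: "left_haar lam"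
    and modular: "modular_function lam D"
  shows "D \<in> borel_measurable borel"
proof -
  obtain A0 where A0: "A0 \<in> sets borel" "0 < emeasure lam A0" "emeasure lam A0 < \<infinity>"
    using haar_A0[OF lc haar] by blast
  have ls: "sets lam = sets borel" using haar by (simp add: left_haar_def)
  have mod: "\<And>g A. A \<in> sets borel \<Longrightarrow> emeasure lam ((\<lambda>x. x + g) ` A) = ennreal (D g) * emeasure lam A"
    and pos: "\<And>g. D g > 0" using modular by (auto simp: modular_function_def)
  define r where "r = enn2real (emeasure lam A0)"
  have r: "emeasure lam A0 = ennreal r" "r > 0" using A0
    by (auto simp: r_def enn2real_positive_iff less_top[symmetric] ennreal_enn2real_if)
  have Deq: "D g = enn2real (emeasure lam ((\<lambda>x. x + g) ` A0)) / r" for g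
    using mod[OF A0(1), of g] r pos[of g] by (simp add: ennreal_mult[symmetric] enn2real_mult)
  have sf: "sigma_finite_measure lam"
  proof -
    obtain K :: "nat \<Rightarrow> 'g set" where K: "\<And>n. compact (K n)" "UNIV = (\<Union>n. K n)"
      using lc_open_compact_Union[OF lc open_UNIV] by blast
    have sp: "space lam = UNIV" using sets_eq_imp_space_eq[OF ls] by simp
    show ?thesis unfolding sigma_finite_measure_def
    proof (intro exI[of _ "range K"] conjI)
      show "range K \<subseteq> sets lam" using K(1) compact_imp_closed borel_closed by (auto simp: ls)
      show "\<Union> (range K) = space lam" using K(2) sp by simp
      show "\<forall>a\<in>range K. emeasure lam a \<noteq> \<infinity>" using haar K(1) by (auto simp: left_haar_def less_top)
    qed simp
  qed
  define Q where "Q = (\<lambda>p::'g \<times> 'g. snd p + - fst p) -` A0"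
  have "continuous_on UNIV (\<lambda>p::'g \<times> 'g. snd p + - fst p)" by (intro continuous_intros)
  then have "(\<lambda>p::'g \<times> 'g. snd p + - fst p) \<in> borel_measurable borel" by (rule borel_measurable_continuous_onI)
  then have "Q \<in> sets borel" unfolding Q_def by (rule measurable_sets_borel[OF _ A0(1)])
  moreover have "sets (borel \<Otimes>\<^sub>M lam) = sets (borel :: ('g \<times> 'g) measure)"
  proof -
    have "sets (borel \<Otimes>\<^sub>M lam) = sets ((borel :: 'g measure) \<Otimes>\<^sub>M (borel :: 'g measure))"
      by (rule sets_pair_measure_cong[OF refl ls])
    also have "\<dots> = sets (borel :: ('g \<times> 'g) measure)" by (simp only: borel_prod)
    finally show ?thesis .
  qed
  ultimately have Qs: "Q \<in> sets (borel \<Otimes>\<^sub>M lam)" by simp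
  have "(\<lambda>g. emeasure lam (Pair g -` Q)) \<in> borel_measurable borel"
    by (rule sigma_finite_measure.measurable_emeasure_Pair[OF sf Qs])
  moreover have "Pair g -` Q = (\<lambda>x. x + g) ` A0" for g unfolding Q_def tr_eq by auto
  ultimately have "(\<lambda>g. emeasure lam ((\<lambda>x. x + g) ` A0)) \<in> borel_measurable borel" by simp
  then have "(\<lambda>g. enn2real (emeasure lam ((\<lambda>x. x + g) ` A0)) / r) \<in> borel_measurable borel"
    by measurable
  moreover have "D = (\<lambda>g. enn2real (emeasure lam ((\<lambda>x. x + g) ` A0)) / r)"
    by (rule ext) (rule Deq)
  ultimately show ?thesis by simp
qed



theorem lemma2p9:
  fixes lam :: "'g::{topological_group_add, second_countable_topology, t2_space} measure"
    and D :: "'g \<Rightarrow> real"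
    and M :: "'s measure"
    and act :: "'g \<Rightarrow> 's \<Rightarrow> 's"
    and \<kappa> :: "'s \<Rightarrow> 's \<Rightarrow> 'g measure"
    and Or :: "'s set"
  assumes G: "lcsc_group TYPE('g)"
    and haar: "left_haar lam"
    and modular: "modular_function lam D"
    and borelS: "borel_space M"
    and action: "measurable_action act M"
    and proper: "proper_action lam M act"
    and kernel_sets: "\<And>s t. s \<in> space M \<Longrightarrow> t \<in> space M \<Longrightarrow> sets (\<kappa> s t) = sets borel"
    and kernel_meas: "\<And>B. B \<in> sets borel \<Longrightarrow>
          (\<lambda>(s, t). emeasure (\<kappa> s t) B) \<in> borel_measurable (M \<Otimes>\<^sub>M M)"
    and disint: "\<And>s f. s \<in> space M \<Longrightarrow> f \<in> borel_measurable (M \<Otimes>\<^sub>M borel) \<Longrightarrow>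
          (\<integral>\<^sup>+ g. f (act g s, g) \<partial>lam)
            = (\<integral>\<^sup>+ t. (\<integral>\<^sup>+ g. f (t, g) \<partial>(\<kappa> s t)) \<partial>(orbit_measure lam M act s))"
    and equivariant: "\<And>s t h. s \<in> space M \<Longrightarrow> t \<in> space M \<Longrightarrow>
          \<kappa> s (act h t) = distr (\<kappa> s t) borel (\<lambda>g. h + g)"
    and concentrated: "\<And>s t. s \<in> space M \<Longrightarrow> t \<in> orbit act s \<Longrightarrow>
          prob_space (\<kappa> s t) \<and> (AE g in \<kappa> s t. act g s = t)"
    and reps: "orbit_representatives M act Or"
  shows "(\<forall>s\<in>space M. orbit act s \<in> univ_sets M)
    \<and> (Or \<in> sets M \<longrightarrow> univ_measurable M M (rep act Or))
    \<and> (Or \<in> sets M \<longrightarrow> (\<forall>B\<in>sets (borel :: 'g measure).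
          univ_measurable M (borel :: ennreal measure) (\<lambda>s. emeasure (\<kappa> (rep act Or s) s) B)))
    \<and> (Or \<in> sets M \<longrightarrow> univ_measurable M (borel :: real measure) (Delta_star D act Or))"
proof -
  have lc: "locally_compact_space (euclidean :: 'g topology)"
    using G by (simp add: lcsc_group_def)
  have actM: "(\<lambda>(g, s). act g s) \<in> (borel \<Otimes>\<^sub>M M) \<rightarrow>\<^sub>M M"
    and act0: "\<And>s. s \<in> space M \<Longrightarrow> act 0 s = s"
    and actadd: "\<And>g h s. s \<in> space M \<Longrightarrow> act (g + h) s = act g (act h s)"
    using action by (simp_all add: measurable_action_def)
  have act2: "(\<lambda>x. act (snd x) (fst x)) \<in> (M \<Otimes>\<^sub>M (borel :: 'g measure)) \<rightarrow>\<^sub>M M"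
  proof -
    have "(\<lambda>x. (snd x, fst x)) \<in> (M \<Otimes>\<^sub>M (borel :: 'g measure)) \<rightarrow>\<^sub>M (borel \<Otimes>\<^sub>M M)"
      by (intro measurable_Pair measurable_snd measurable_fst)
    from measurable_compose[OF this actM] show ?thesis by simp
  qed
  have spP: "space (M \<Otimes>\<^sub>M (borel :: 'g measure)) = space M \<times> UNIV" by (simp add: space_pair_measure)
  have actsp: "act g s \<in> space M" if "s \<in> space M" for g s
  proof -
    have "(s, g) \<in> space (M \<Otimes>\<^sub>M (borel :: 'g measure))" using that spP by simp
    from measurable_space[OF act2 this] show ?thesis by simp
  qed
  obtain f :: "'s \<Rightarrow> real" and B where fB: "bij_betw f (space M) B"
    and fM: "f \<in> M \<rightarrow>\<^sub>M restrict_space borel B"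
    using borelS unfolding borel_space_def by blast
  have fmeas: "f \<in> borel_measurable M" using fM by (simp add: measurable_restrict_space2_iff)
  have finj: "inj_on f (space M)" using fB by (rule bij_betw_imp_inj_on)
  have part1: "orbit act s \<in> univ_sets M" if s: "s \<in> space M" for s
  proof -
    define T where "T = {x \<in> space (M \<Otimes>\<^sub>M (borel :: 'g measure)). f (act (snd x) s) = f (fst x)}"
    have m1: "(\<lambda>x. act (snd x) s) \<in> (M \<Otimes>\<^sub>M (borel :: 'g measure)) \<rightarrow>\<^sub>M M"
    proof -
      have "(\<lambda>x. (s, snd x)) \<in> (M \<Otimes>\<^sub>M (borel :: 'g measure)) \<rightarrow>\<^sub>M (M \<Otimes>\<^sub>M (borel :: 'g measure))"
        using s by (intro measurable_Pair measurable_snd measurable_const)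
      from measurable_compose[OF this act2] show ?thesis by simp
    qed
    have "T \<in> sets (M \<Otimes>\<^sub>M (borel :: 'g measure))" unfolding T_def
    proof (rule measurable_equality_set)
      show "(\<lambda>x. f (act (snd x) s)) \<in> borel_measurable (M \<Otimes>\<^sub>M borel)"
        by (rule measurable_compose[OF m1 fmeas])
      show "(\<lambda>x. f (fst x)) \<in> borel_measurable (M \<Otimes>\<^sub>M borel)"
        by (rule measurable_compose[OF measurable_fst fmeas])
    qed
    then have "fst ` T \<in> univ_sets M" by (rule proj_univ[OF lc])
    moreover have "fst ` T = orbit act s"
    proof (rule set_eqI)
      fix t show "t \<in> fst ` T \<longleftrightarrow> t \<in> orbit act s"
      proof
        assume "t \<in> fst ` T"
        then obtain g where tg: "(t, g) \<in> T" by force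
        then have "t \<in> space M" "f (act g s) = f t" by (auto simp: T_def spP)
        then have "act g s = t" using finj actsp[OF s] by (auto dest: inj_onD)
        then show "t \<in> orbit act s" unfolding orbit_def by blast
      next
        assume "t \<in> orbit act s"
        then obtain g where "t = act g s" unfolding orbit_def by blast
        then have "(t, g) \<in> T" using actsp[OF s] by (simp add: T_def spP)
        then show "t \<in> fst ` T" by force
      qed
    qed
    ultimately show ?thesis by simp
  qed
  have repex: "rep act Or s \<in> Or \<and> rep act Or s \<in> orbit act s" if "s \<in> space M" for s
  proof -
    have "\<exists>!r. r \<in> Or \<and> r \<in> orbit act s" using reps that by (simp add: orbit_representatives_def)
    then show ?thesis unfolding rep_def by (rule theI')
  qed
  have repuniq: "r = rep act Or s" if "s \<in> space M" "r \<in> Or" "r \<in> orbit act s" for s r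
  proof -
    have "\<exists>!r. r \<in> Or \<and> r \<in> orbit act s" using reps that(1) by (simp add: orbit_representatives_def)
    then show ?thesis using repex[OF that(1)] that(2,3) by blast
  qed
  have Orsp: "Or \<subseteq> space M" using reps by (simp add: orbit_representatives_def)
  have key: "(\<exists>g. act g s \<in> Or \<and> P (act g s) s) \<longleftrightarrow> P (rep act Or s) s" if s: "s \<in> space M" for s P
  proof
    assume "\<exists>g. act g s \<in> Or \<and> P (act g s) s"
    then obtain g where g: "act g s \<in> Or" "P (act g s) s" by blast
    have "act g s = rep act Or s" using repuniq[OF s g(1)] by (simp add: orbit_def)
    with g(2) show "P (rep act Or s) s" by simp
  next
    assume P: "P (rep act Or s) s"
    obtain g where g: "rep act Or s = act g s" using repex[OF s] unfolding orbit_def by blast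
    have "act g s \<in> Or" using repex[OF s] g by simp
    moreover have "P (act g s) s" using P g by simp
    ultimately show "\<exists>g. act g s \<in> Or \<and> P (act g s) s" by blast
  qed
  have projset: "{s \<in> space M. \<exists>g. R s g} \<in> univ_sets M"
    if T: "{x \<in> space (M \<Otimes>\<^sub>M (borel :: 'g measure)). R (fst x) (snd x)} \<in> sets (M \<Otimes>\<^sub>M (borel :: 'g measure))" for R
  proof -
    have "fst ` {x \<in> space (M \<Otimes>\<^sub>M (borel :: 'g measure)). R (fst x) (snd x)} = {s \<in> space M. \<exists>g. R s g}"
    proof (rule set_eqI)
      fix s
      show "s \<in> fst ` {x \<in> space (M \<Otimes>\<^sub>M (borel :: 'g measure)). R (fst x) (snd x)} \<longleftrightarrow> s \<in> {s \<in> space M. \<exists>g. R s g}"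
      proof
        assume "s \<in> fst ` {x \<in> space (M \<Otimes>\<^sub>M (borel :: 'g measure)). R (fst x) (snd x)}"
        then obtain x where "x \<in> space (M \<Otimes>\<^sub>M (borel :: 'g measure))" "R (fst x) (snd x)" "s = fst x" by blast
        then show "s \<in> {s \<in> space M. \<exists>g. R s g}" by (auto simp: spP)
      next
        assume "s \<in> {s \<in> space M. \<exists>g. R s g}"
        then obtain g where "s \<in> space M" "R s g" by blast
        then have "(s, g) \<in> {x \<in> space (M \<Otimes>\<^sub>M (borel :: 'g measure)). R (fst x) (snd x)}" by (simp add: spP)
        then show "s \<in> fst ` {x \<in> space (M \<Otimes>\<^sub>M (borel :: 'g measure)). R (fst x) (snd x)}" by force
      qed
    qed
    with proj_univ[OF lc T] show ?thesis by simp
  qed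
  have part2: "univ_measurable M M (rep act Or)" if Or: "Or \<in> sets M"
    unfolding univ_measurable_def
  proof (intro conjI ballI)
    show "rep act Or \<in> space M \<rightarrow> space M" using repex Orsp by blast
    fix A assume A: "A \<in> sets M"
    have "{x \<in> space (M \<Otimes>\<^sub>M (borel :: 'g measure)). act (snd x) (fst x) \<in> Or \<and> act (snd x) (fst x) \<in> A}
        = (\<lambda>x. act (snd x) (fst x)) -` (Or \<inter> A) \<inter> space (M \<Otimes>\<^sub>M (borel :: 'g measure))" by auto
    also have "\<dots> \<in> sets (M \<Otimes>\<^sub>M (borel :: 'g measure))" using Or A by (intro measurable_sets[OF act2]) auto
    finally have "{s \<in> space M. \<exists>g. act g s \<in> Or \<and> act g s \<in> A} \<in> univ_sets M"
      by (rule projset[where R = "\<lambda>s g. act g s \<in> Or \<and> act g s \<in> A", simplified])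
    moreover have "rep act Or -` A \<inter> space M = {s \<in> space M. \<exists>g. act g s \<in> Or \<and> act g s \<in> A}"
      using key[where P = "\<lambda>r s. r \<in> A"] by auto
    ultimately show "rep act Or -` A \<inter> space M \<in> univ_sets M" by simp
  qed
  have part3: "univ_measurable M (borel :: ennreal measure) (\<lambda>s. emeasure (\<kappa> (rep act Or s) s) Bg)"
    if Or: "Or \<in> sets M" and Bg: "Bg \<in> sets (borel :: 'g measure)" for Bg
    unfolding univ_measurable_def
  proof (intro conjI ballI)
    show "(\<lambda>s. emeasure (\<kappa> (rep act Or s) s) Bg) \<in> space M \<rightarrow> space borel" by simp
    fix X :: "ennreal set" assume X: "X \<in> sets borel"
    define h where "h = (\<lambda>x. emeasure (\<kappa> (act (snd x) (fst x)) (fst x)) Bg)"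
    have hm: "h \<in> borel_measurable (M \<Otimes>\<^sub>M (borel :: 'g measure))"
    proof -
      have "(\<lambda>x. (act (snd x) (fst x), fst x)) \<in> (M \<Otimes>\<^sub>M (borel :: 'g measure)) \<rightarrow>\<^sub>M (M \<Otimes>\<^sub>M M)"
        by (intro measurable_Pair act2 measurable_fst)
      from measurable_compose[OF this kernel_meas[OF Bg]] show ?thesis by (simp add: h_def)
    qed
    have "{x \<in> space (M \<Otimes>\<^sub>M (borel :: 'g measure)). act (snd x) (fst x) \<in> Or \<and> emeasure (\<kappa> (act (snd x) (fst x)) (fst x)) Bg \<in> X}
        = ((\<lambda>x. act (snd x) (fst x)) -` Or \<inter> space (M \<Otimes>\<^sub>M (borel :: 'g measure))) \<inter> (h -` X \<inter> space (M \<Otimes>\<^sub>M (borel :: 'g measure)))"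
      by (auto simp: h_def)
    also have "\<dots> \<in> sets (M \<Otimes>\<^sub>M (borel :: 'g measure))"
      using measurable_sets[OF act2 Or] measurable_sets[OF hm X] by (rule sets.Int)
    finally have "{s \<in> space M. \<exists>g. act g s \<in> Or \<and> emeasure (\<kappa> (act g s) s) Bg \<in> X} \<in> univ_sets M"
      by (rule projset[where R = "\<lambda>s g. act g s \<in> Or \<and> emeasure (\<kappa> (act g s) s) Bg \<in> X", simplified])
    moreover have "(\<lambda>s. emeasure (\<kappa> (rep act Or s) s) Bg) -` X \<inter> space M
        = {s \<in> space M. \<exists>g. act g s \<in> Or \<and> emeasure (\<kappa> (act g s) s) Bg \<in> X}"
      using key[where P = "\<lambda>r s. emeasure (\<kappa> r s) Bg \<in> X"] by auto
    ultimately show "(\<lambda>s. emeasure (\<kappa> (rep act Or s) s) Bg) -` X \<inter> space M \<in> univ_sets M" by simp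
  qed
  have Dm: "D \<in> borel_measurable borel" by (rule haar_D_meas[OF lc haar modular])
  have Dmult: "D (a + b) = D a * D b" for a b by (rule haar_D_mult[OF lc haar modular])
  have Dpos: "D g > 0" for g using modular by (simp add: modular_function_def)
  have D0: "D 0 = 1"
  proof -
    have "D 0 = D 0 * D 0" using Dmult[of 0 0] by simp
    with Dpos[of 0] show ?thesis by simp
  qed
  have Dinv: "D (- g) * D g = 1" for g using Dmult[of "- g" g] D0 by simp
  have stab_le: "ln (D h) \<le> 0" if s: "s \<in> space M" and h: "act h s = s" for s h
  proof (rule ccontr)
    assume "\<not> ln (D h) \<le> 0"
    then have c: "ln (D h) > 0" by simp
    define \<kappa>0 where "\<kappa>0 = \<kappa> s s"
    have sor: "s \<in> orbit act s" using act0[OF s] unfolding orbit_def by (metis rangeI)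
    have P0: "prob_space \<kappa>0" using concentrated[OF s sor] by (simp add: \<kappa>0_def)
    have S0: "sets \<kappa>0 = sets borel" using kernel_sets[OF s s] by (simp add: \<kappa>0_def)
    have sp0: "space \<kappa>0 = UNIV" using sets_eq_imp_space_eq[OF S0] by simp
    have inv0: "\<kappa>0 = distr \<kappa>0 borel (\<lambda>g. h + g)"
      using equivariant[OF s s, of h] h by (simp add: \<kappa>0_def)
    have lnDb: "(\<lambda>g. ln (D g)) \<in> borel_measurable borel" using Dm by measurable
    have lnD: "(\<lambda>g. ln (D g)) \<in> \<kappa>0 \<rightarrow>\<^sub>M borel"
      by (subst measurable_cong_sets[OF S0 refl]) (rule lnDb)
    define Qm where "Qm = distr \<kappa>0 borel (\<lambda>g. ln (D g))"
    have PQ: "prob_space Qm" unfolding Qm_def by (rule prob_space.prob_space_distr[OF P0 lnD])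
    have SQ: "sets Qm = sets borel" by (simp add: Qm_def)
    have addm: "(\<lambda>g. h + g) \<in> \<kappa>0 \<rightarrow>\<^sub>M borel"
    proof -
      have "continuous_on UNIV (\<lambda>g::'g. h + g)" by (intro continuous_intros)
      then have "(\<lambda>g::'g. h + g) \<in> borel_measurable borel" by (rule borel_measurable_continuous_onI)
      then show ?thesis by (subst measurable_cong_sets[OF S0 refl])
    qed
    have "measure Qm {..t} = measure Qm {..t - ln (D h)}" for t
    proof -
      have set1: "{g. ln (D g) \<le> t} \<in> sets borel" using lnDb by measurable
      have "measure Qm {..t} = measure \<kappa>0 {g. ln (D g) \<le> t}"
        unfolding Qm_def by (subst measure_distr[OF lnD]) (auto simp: sp0 atMost_def vimage_def)
      also have "\<dots> = measure (distr \<kappa>0 borel (\<lambda>g. h + g)) {g. ln (D g) \<le> t}"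
        using inv0 by simp
      also have "\<dots> = measure \<kappa>0 ((\<lambda>g. h + g) -` {g. ln (D g) \<le> t} \<inter> space \<kappa>0)"
        by (rule measure_distr[OF addm set1])
      also have "(\<lambda>g. h + g) -` {g. ln (D g) \<le> t} \<inter> space \<kappa>0 = {g. ln (D g) \<le> t - ln (D h)}"
      proof (rule set_eqI)
        fix x
        have e: "ln (D (h + x)) = ln (D h) + ln (D x)" using Dpos[of h] Dpos[of x] by (simp add: Dmult ln_mult)
        show "x \<in> (\<lambda>g. h + g) -` {g. ln (D g) \<le> t} \<inter> space \<kappa>0 \<longleftrightarrow> x \<in> {g. ln (D g) \<le> t - ln (D h)}"
          using e by (simp add: sp0 le_diff_eq add.commute)
      qed
      also have "measure \<kappa>0 {g. ln (D g) \<le> t - ln (D h)} = measure Qm {..t - ln (D h)}"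
        unfolding Qm_def by (subst measure_distr[OF lnD]) (auto simp: sp0 atMost_def vimage_def)
      finally show ?thesis .
    qed
    then show False using no_shift_invariant_prob[OF PQ SQ c] by blast
  qed
  have stab: "D h = 1" if s: "s \<in> space M" and h: "act h s = s" for s h
  proof -
    have h': "act (- h) s = s" using actadd[OF s, of "- h" h] h act0[OF s] by simp
    have "ln (D h) \<le> 0" by (rule stab_le[OF s h])
    moreover have "ln (D (- h)) \<le> 0" by (rule stab_le[OF s h'])
    moreover have "ln (D (- h)) = - ln (D h)"
    proof -
      have "ln (D (- h)) + ln (D h) = ln (D (- h) * D h)" using Dpos[of "- h"] Dpos[of h] by (simp add: ln_mult)
      also have "\<dots> = 0" using Dinv by simp
      finally show ?thesis by simp
    qed
    ultimately have "ln (D h) = 0" by simp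
    then show ?thesis using Dpos[of h] by simp
  qed
  have dstar: "Delta_star D act Or s = D g" if s: "s \<in> space M" and g: "act g s = rep act Or s" for s g
  proof -
    have ex: "\<exists>g'. act g' (rep act Or s) = s"
    proof
      show "act (- g) (rep act Or s) = s" using g actadd[OF s, of "- g" g] act0[OF s] by simp
    qed
    define g' where "g' = (SOME g'. act g' (rep act Or s) = s)"
    have g': "act g' (rep act Or s) = s" unfolding g'_def using ex by (rule someI_ex)
    have "act (g' + g) s = s" using actadd[OF s, of g' g] g g' by simp
    then have "D g' * D g = 1" using stab[OF s] Dmult by metis
    moreover have "D (- g') * D g' = 1" by (rule Dinv)
    ultimately have "D g = D (- g')" using Dpos[of g'] by (metis mult.commute mult_left_cancel less_irrefl)
    then show ?thesis unfolding Delta_star_def g'_def by simp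
  qed
  have part4: "univ_measurable M (borel :: real measure) (Delta_star D act Or)" if Or: "Or \<in> sets M"
    unfolding univ_measurable_def
  proof (intro conjI ballI)
    show "Delta_star D act Or \<in> space M \<rightarrow> space borel" by simp
    fix X :: "real set" assume X: "X \<in> sets borel"
    have dm: "(\<lambda>x. D (snd x)) \<in> borel_measurable (M \<Otimes>\<^sub>M (borel :: 'g measure))"
      by (rule measurable_compose[OF measurable_snd Dm])
    have "{x \<in> space (M \<Otimes>\<^sub>M (borel :: 'g measure)). act (snd x) (fst x) \<in> Or \<and> D (snd x) \<in> X}
        = ((\<lambda>x. act (snd x) (fst x)) -` Or \<inter> space (M \<Otimes>\<^sub>M (borel :: 'g measure))) \<inter> ((\<lambda>x. D (snd x)) -` X \<inter> space (M \<Otimes>\<^sub>M (borel :: 'g measure)))"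
      by auto
    also have "\<dots> \<in> sets (M \<Otimes>\<^sub>M (borel :: 'g measure))"
      using measurable_sets[OF act2 Or] measurable_sets[OF dm X] by (rule sets.Int)
    finally have "{s \<in> space M. \<exists>g. act g s \<in> Or \<and> D g \<in> X} \<in> univ_sets M"
      by (rule projset[where R = "\<lambda>s g. act g s \<in> Or \<and> D g \<in> X", simplified])
    moreover have "Delta_star D act Or -` X \<inter> space M = {s \<in> space M. \<exists>g. act g s \<in> Or \<and> D g \<in> X}"
    proof (rule set_eqI)
      fix s show "s \<in> Delta_star D act Or -` X \<inter> space M \<longleftrightarrow> s \<in> {s \<in> space M. \<exists>g. act g s \<in> Or \<and> D g \<in> X}"
      proof
        assume "s \<in> Delta_star D act Or -` X \<inter> space M"
        then have s: "s \<in> space M" and X1: "Delta_star D act Or s \<in> X" by auto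
        obtain g where g: "rep act Or s = act g s" using repex[OF s] unfolding orbit_def by blast
        have "act g s \<in> Or" using repex[OF s] g by simp
        moreover have "D g \<in> X" using X1 dstar[OF s g[symmetric]] by simp
        ultimately show "s \<in> {s \<in> space M. \<exists>g. act g s \<in> Or \<and> D g \<in> X}" using s by blast
      next
        assume "s \<in> {s \<in> space M. \<exists>g. act g s \<in> Or \<and> D g \<in> X}"
        then obtain g where s: "s \<in> space M" and g: "act g s \<in> Or" "D g \<in> X" by blast
        have "act g s = rep act Or s" using repuniq[OF s g(1)] by (simp add: orbit_def)
        then have "Delta_star D act Or s = D g" by (rule dstar[OF s])
        with g(2) s show "s \<in> Delta_star D act Or -` X \<inter> space M" by simp
      qed
    qed
    ultimately show "Delta_star D act Or -` X \<inter> space M \<in> univ_sets M" by simp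
  qed
  show ?thesis using part1 part2 part3 part4 by blast
qed


end
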